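(* There is an absolute constant $K$ such that the following holds. Let $C\ge1$, let $I$ be an instance of dynamic bin packing with migration delays in which every item has duration at least $1$, run Algorithm 3 (described in the context) on $I$, and let $\tilde I_b$ be the instance of big parts defined in the context. Then $\mathrm{FirstFit}(\tilde I_b)\le K\sqrt{C}\cdot\mathrm{OPT}(I)$.
   Context: Dynamic bin packing with migration delays: bins have capacity $1$; items arrive online at times $a_i\ge0$ with size $s_i\in[0,1]$ and initial duration $d_i>0$ (unknown at arrival). Each migration of an item (moving it to another bin) increases its duration by $C$; the delayed duration is $\tilde d_i=d_i+(\text{number of migrations of } i)\cdot C$ and the item departs at $a_i+\tilde d_i$. A bin is open while nonempty. For an instance $J$, $\mathrm{FirstFit}(J)$ is the total active time $\int_0^\infty(\text{number of open bins at } t)\,dt$ of the FirstFit algorithm on $J$ (each arriving item goes into the earliest-opened open bin with enough remaining capacity, else a new bin; no migrations), and $\mathrm{OPT}(J)=\int_0^\infty\mathrm{OPT}_t\,dt$ with $\mathrm{OPT}_t$ the minimum number of unit bins needed to pack the items of $J$ present at time $t$ (for $I$, using the original durations $d_i$). Algorithm 3: maintain two disjoint pools of bins $I_s$ and $I_b$. Each arriving item is placed into $I_s$ by FirstFit. When an item has been in $I_s$ for exactly $\sqrt{C}$ time, it is migrated into $I_b$ by FirstFit. When an item has been in $I_b$ for exactly $C+\sqrt{C}$ time since its most recent migration, it is migrated into $I_b$ by FirstFit. Big parts: for each item $i$ that Algorithm 3 migrates, at times $t_1<\dots<t_m$ ($m\ge1$), its big parts are items of size $s_i$ with arrival time $t_j$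 and duration $t_{j+1}-t_j$ for $j=1,\dots,m-1$, together with a final big part with arrival time $t_m$ and duration $a_i+\tilde d_i-t_m$ (ending when the item departs). $\tilde I_b$ is the instance consisting of all big parts of all items. *)

theory Defs
  imports "HOL-Analysis.Analysis"
begin

text \<open>An item is a triple (arrival time, size, duration).  An instance is a finite
  list of items; item i of instance J is J ! i for i < length J.\<close>

type_synonym item = "real \<times> real \<times> real"

definition arr :: "item \<Rightarrow> real" where "arr it = fst it"
definition sz  :: "item \<Rightarrow> real" where "sz it = fst (snd it)"
definition dur :: "item \<Rightarrow> real" where "dur it = snd (snd it)"

definition valid_instance :: "item list \<Rightarrow> bool" where
  "valid_instance J \<longleftrightarrow> (\<forall>it\<in>set J. 0 \<le> arr it \<and> 0 \<le> sz it \<and> sz it \<le> 1 \<and> 0 < dur it)"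

text \<open>Item i is present at time t iff arrival <= t < arrival + duration
  (so at a common time, departures happen before arrivals).\<close>
definition present :: "item list \<Rightarrow> nat \<Rightarrow> real \<Rightarrow> bool" where
  "present J i t \<longleftrightarrow> i < length J \<and> arr (J ! i) \<le> t \<and> t < arr (J ! i) + dur (J ! i)"

text \<open>Items are processed in order of arrival; simultaneous arrivals in list order (sort_key is a stable sort).\<close>
definition ff_order :: "item list \<Rightarrow> nat list" where
  "ff_order J = sort_key (\<lambda>i. arr (J ! i)) [0..<length J]"

text \<open>Bins get identifiers 0,1,2,... in the order in which they are opened.
  State: (assignment item -> bin id, set of already placed items, number of bins opened so far).\<close>
definition bin_load :: "item list \<Rightarrow> nat set \<Rightarrow> (nat \<Rightarrow> nat) \<Rightarrow> nat \<Rightarrow> real \<Rightarrow> real" where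
  "bin_load J P asg b t = (\<Sum>j\<in>P. if asg j = b \<and> present J j t then sz (J ! j) else 0)"

definition bin_is_open :: "item list \<Rightarrow> nat set \<Rightarrow> (nat \<Rightarrow> nat) \<Rightarrow> nat \<Rightarrow> real \<Rightarrow> bool" where
  "bin_is_open J P asg b t \<longleftrightarrow> (\<exists>j\<in>P. asg j = b \<and> present J j t)"

fun ff_run :: "item list \<Rightarrow> nat list \<Rightarrow> (nat \<Rightarrow> nat) \<times> nat set \<times> nat \<Rightarrow> (nat \<Rightarrow> nat) \<times> nat set \<times> nat" where
  "ff_run J [] st = st"
| "ff_run J (i # is) (asg, P, n) =
     (let t = arr (J ! i);
          fits = {b. b < n \<and> bin_is_open J P asg b t \<and> bin_load J P asg b t + sz (J ! i) \<le> 1}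
      in if fits \<noteq> {} then ff_run J is (asg(i := Min fits), insert i P, n)
         else ff_run J is (asg(i := n), insert i P, Suc n))"

definition ff_assign :: "item list \<Rightarrow> nat \<Rightarrow> nat" where
  "ff_assign J = fst (ff_run J (ff_order J) (\<lambda>_. 0, {}, 0))"

definition ff_open_bins :: "item list \<Rightarrow> real \<Rightarrow> nat" where
  "ff_open_bins J t = card {b. \<exists>i<length J. ff_assign J i = b \<and> present J i t}"

definition FirstFit :: "item list \<Rightarrow> ennreal" where
  "FirstFit J = (\<integral>\<^sup>+ t\<in>{0..}. ennreal (real (ff_open_bins J t)) \<partial>lborel)"

definition OPT_at :: "item list \<Rightarrow> real \<Rightarrow> nat" where
  "OPT_at J t = (LEAST k. \<exists>f :: nat \<Rightarrow> nat.
       (\<forall>i. present J i t \<longrightarrow> f i < k) \<and>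
       (\<forall>b<k. (\<Sum>i\<in>{i. present J i t \<and> f i = b}. sz (J ! i)) \<le> 1))"

definition OPT :: "item list \<Rightarrow> ennreal" where
  "OPT J = (\<integral>\<^sup>+ t\<in>{0..}. ennreal (real (OPT_at J t)) \<partial>lborel)"

text \<open>Under Algorithm 3 the migration times of an item do not depend on the packing:
  the (j+1)-th migration (j = 0,1,...) is scheduled at time
  a + sqrt C + j (C + sqrt C) (sqrt C after arrival, then C + sqrt C after each
  migration), and it takes place iff the item is still present then, i.e. iff its
  departure time with the j migrations performed so far, a + d + j C, is later.\<close>
definition mig_time :: "real \<Rightarrow> item \<Rightarrow> nat \<Rightarrow> real" where
  "mig_time C it j = arr it + sqrt C + real j * (C + sqrt C)"

definition num_mig :: "real \<Rightarrow> item \<Rightarrow> nat" where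
  "num_mig C it = (LEAST j. \<not> (mig_time C it j < arr it + dur it + real j * C))"

definition alg3_departure :: "real \<Rightarrow> item \<Rightarrow> real" where
  "alg3_departure C it = arr it + dur it + real (num_mig C it) * C"

text \<open>Big parts of one item: for migrations t_1 < ... < t_m (here indices 0..m-1),
  part j arrives at t_j with the item's size and lasts until the next migration,
  the last one until the item departs.\<close>
definition big_parts_item :: "real \<Rightarrow> item \<Rightarrow> item list" where
  "big_parts_item C it =
     map (\<lambda>j. (mig_time C it j, sz it,
               (if Suc j < num_mig C it then mig_time C it (Suc j) else alg3_departure C it)
               - mig_time C it j))
         [0..<num_mig C it]"

definition big_parts :: "real \<Rightarrow> item list \<Rightarrow> item list" where
  "big_parts C I = concat (map (big_parts_item C) I)"

end

theory Submission
  imports Defs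
begin

definition fitsset :: "item list \<Rightarrow> nat set \<Rightarrow> (nat \<Rightarrow> nat) \<Rightarrow> nat \<Rightarrow> nat \<Rightarrow> nat set" where
  "fitsset J P asg n i = {b. b < n \<and> bin_is_open J P asg b (arr (J ! i)) \<and> bin_load J P asg b (arr (J ! i)) + sz (J ! i) \<le> 1}"
definition ffstep :: "item list \<Rightarrow> nat \<Rightarrow> (nat \<Rightarrow> nat) \<times> nat set \<times> nat \<Rightarrow> (nat \<Rightarrow> nat) \<times> nat set \<times> nat" where
  "ffstep J i st = (case st of (asg, P, n) \<Rightarrow>
     if fitsset J P asg n i \<noteq> {} then (asg(i := Min (fitsset J P asg n i)), insert i P, n)
     else (asg(i := n), insert i P, Suc n))"
lemma ff_run_cons: "ff_run J (x # xs) st = ff_run J xs (ffstep J x st)"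
proof -
  obtain a P n where st: "st = (a, P, n)" by (cases st) auto
  show ?thesis unfolding st ff_run.simps Let_def ffstep_def fitsset_def prod.case
    by (simp only: if_distrib[of "ff_run J xs"])
qed
lemma ff_run_fold: "ff_run J xs st = fold (ffstep J) xs st"
  by (induction xs arbitrary: st) (simp_all add: ff_run_cons)

definition stk :: "item list \<Rightarrow> nat \<Rightarrow> (nat \<Rightarrow> nat) \<times> nat set \<times> nat" where
  "stk J k = fold (ffstep J) (take k (ff_order J)) (\<lambda>_. 0, {}, 0)"
definition asgk where "asgk J k = fst (stk J k)"
definition Pk where "Pk J k = fst (snd (stk J k))"
definition nk where "nk J k = snd (snd (stk J k))"

lemma len_ord[simp]: "length (ff_order J) = length J" by (simp add: ff_order_def)
lemma set_ord: "set (ff_order J) = {0..<length J}" by (simp add: ff_order_def)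
lemma dist_ord: "distinct (ff_order J)" by (simp add: ff_order_def)
lemma sorted_ord: "sorted (map (\<lambda>i. arr (J!i)) (ff_order J))" by (simp add: ff_order_def sorted_sort_key)

lemma ord_mono: "k1 \<le> k2 \<Longrightarrow> k2 < length J \<Longrightarrow> arr (J ! (ff_order J ! k1)) \<le> arr (J ! (ff_order J ! k2))"
  using sorted_nth_mono[OF sorted_ord[of J], of k1 k2] by simp

lemma stk_Suc: "k < length J \<Longrightarrow> stk J (Suc k) = ffstep J (ff_order J ! k) (stk J k)"
  by (simp add: stk_def take_Suc_conv_app_nth)

lemma stk_0: "stk J 0 = (\<lambda>_. 0, {}, 0)" by (simp add: stk_def)

lemma fitsset_finite: "finite (fitsset J P a n i)"
  by (rule finite_subset[of _ "{..<n}"]) (auto simp: fitsset_def)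

lemma fitsset_lt: "b \<in> fitsset J P a n i \<Longrightarrow> b < n" by (simp add: fitsset_def)

lemma ffstep_parts:
  "fst (ffstep J i (a,P,n)) = a(i := (if fitsset J P a n i \<noteq> {} then Min (fitsset J P a n i) else n))"
  "fst (snd (ffstep J i (a,P,n))) = insert i P"
  "snd (snd (ffstep J i (a,P,n))) = (if fitsset J P a n i \<noteq> {} then n else Suc n)"
  by (auto simp: ffstep_def)

lemma stk_Suc_parts:
  assumes "k < length J"
  shows "asgk J (Suc k) = (asgk J k)(ff_order J ! k := (if fitsset J (Pk J k) (asgk J k) (nk J k) (ff_order J ! k) \<noteq> {}
            then Min (fitsset J (Pk J k) (asgk J k) (nk J k) (ff_order J ! k)) else nk J k))"
    "Pk J (Suc k) = insert (ff_order J ! k) (Pk J k)"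
    "nk J (Suc k) = (if fitsset J (Pk J k) (asgk J k) (nk J k) (ff_order J ! k) \<noteq> {} then nk J k else Suc (nk J k))"
proof -
  obtain a P n where st: "stk J k = (a,P,n)" by (cases "stk J k") auto
  show "asgk J (Suc k) = (asgk J k)(ff_order J ! k := (if fitsset J (Pk J k) (asgk J k) (nk J k) (ff_order J ! k) \<noteq> {}
            then Min (fitsset J (Pk J k) (asgk J k) (nk J k) (ff_order J ! k)) else nk J k))"
    "Pk J (Suc k) = insert (ff_order J ! k) (Pk J k)"
    "nk J (Suc k) = (if fitsset J (Pk J k) (asgk J k) (nk J k) (ff_order J ! k) \<noteq> {} then nk J k else Suc (nk J k))"
    unfolding asgk_def Pk_def nk_def stk_Suc[OF assms] st ffstep_parts by simp_all
qed

lemma asg_val_lt: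
  "(if fitsset J P a n i \<noteq> {} then Min (fitsset J P a n i) else n) \<le> n"
proof (cases "fitsset J P a n i = {}")
  case False
  then have "Min (fitsset J P a n i) \<in> fitsset J P a n i" by (rule Min_in[OF fitsset_finite])
  then have "Min (fitsset J P a n i) < n" by (rule fitsset_lt)
  then show ?thesis using False by simp
qed simp

lemma inv1: "k \<le> length J \<Longrightarrow> Pk J k = set (take k (ff_order J)) \<and> (\<forall>j\<in>Pk J k. asgk J k j < nk J k)"
proof (induction k)
  case 0 then show ?case by (simp add: Pk_def asgk_def nk_def stk_0)
next
  case (Suc k)
  then have k: "k < length J" by simp
  have v: "(if fitsset J (Pk J k) (asgk J k) (nk J k) (ff_order J ! k) \<noteq> {}
            then Min (fitsset J (Pk J k) (asgk J k) (nk J k) (ff_order J ! k)) else nk J k) < nk J (Suc k)"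
  proof (cases "fitsset J (Pk J k) (asgk J k) (nk J k) (ff_order J ! k) = {}")
    case False
    then have "Min (fitsset J (Pk J k) (asgk J k) (nk J k) (ff_order J ! k)) \<in> fitsset J (Pk J k) (asgk J k) (nk J k) (ff_order J ! k)"
      by (rule Min_in[OF fitsset_finite])
    then have "Min (fitsset J (Pk J k) (asgk J k) (nk J k) (ff_order J ! k)) < nk J k" by (rule fitsset_lt)
    then show ?thesis using False unfolding stk_Suc_parts(3)[OF k] by simp
  qed (simp add: stk_Suc_parts(3)[OF k])
  have mono: "nk J k \<le> nk J (Suc k)" unfolding stk_Suc_parts(3)[OF k] by simp
  have IH: "Pk J k = set (take k (ff_order J))" "\<forall>j\<in>Pk J k. asgk J k j < nk J k" using Suc k by auto
  have P1: "Pk J (Suc k) = set (take (Suc k) (ff_order J))"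
    using IH(1) k by (simp add: stk_Suc_parts(2)[OF k] take_Suc_conv_app_nth)
  have A1: "\<forall>j\<in>Pk J (Suc k). asgk J (Suc k) j < nk J (Suc k)"
  proof
    fix j assume j: "j \<in> Pk J (Suc k)"
    show "asgk J (Suc k) j < nk J (Suc k)"
    proof (cases "j = ff_order J ! k")
      case True then show ?thesis using v by (simp add: stk_Suc_parts(1)[OF k])
    next
      case False
      then have "j \<in> Pk J k" using j by (simp add: stk_Suc_parts(2)[OF k])
      then have "asgk J k j < nk J k" using IH(2) by blast
      then show ?thesis using False mono by (simp add: stk_Suc_parts(1)[OF k])
    qed
  qed
  show ?case using P1 A1 by blast
qed

lemma nth_notin_take: "distinct xs \<Longrightarrow> k < length xs \<Longrightarrow> xs ! k \<notin> set (take k xs)"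
proof
  assume d: "distinct xs" and k: "k < length xs" and "xs ! k \<in> set (take k xs)"
  then obtain i where i: "i < length (take k xs)" "take k xs ! i = xs ! k" by (auto simp: in_set_conv_nth)
  then have "xs ! i = xs ! k" "i < k" by auto
  with d k show False by (simp add: nth_eq_iff_index_eq)
qed

lemma stable: "k \<le> k' \<Longrightarrow> k' \<le> length J \<Longrightarrow>
   (\<forall>j\<in>Pk J k. asgk J k' j = asgk J k j) \<and> nk J k \<le> nk J k' \<and> Pk J k \<subseteq> Pk J k'"
proof (induction k')
  case 0 then show ?case by simp
next
  case (Suc k')
  show ?case
  proof (cases "k = Suc k'")
    case True then show ?thesis by simp
  next
    case False
    then have kk: "k \<le> k'" and k': "k' < length J" using Suc by auto
    then have IH: "(\<forall>j\<in>Pk J k. asgk J k' j = asgk J k j) \<and> nk J k \<le> nk J k' \<and> Pk J k \<subseteq> Pk J k'"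
      using Suc by auto
    have "ff_order J ! k' \<notin> Pk J k'"
      using inv1[of k' J] k' nth_notin_take[OF dist_ord, of k' J] by simp
    then have nx: "\<forall>j\<in>Pk J k. j \<noteq> ff_order J ! k'" using IH by blast
    have a: "\<forall>j\<in>Pk J k. asgk J (Suc k') j = asgk J k j"
      using IH nx unfolding stk_Suc_parts(1)[OF k'] by simp
    have n: "nk J k \<le> nk J (Suc k')"
      using IH unfolding stk_Suc_parts(3)[OF k'] by simp
    have p: "Pk J k \<subseteq> Pk J (Suc k')"
      using IH unfolding stk_Suc_parts(2)[OF k'] by blast
    show ?thesis using a n p by blast
  qed
qed

lemma ff_assign_eq: "ff_assign J = asgk J (length J)"
  by (simp add: ff_assign_def ff_run_fold asgk_def stk_def)

lemma A_agree: "k \<le> length J \<Longrightarrow> j \<in> Pk J k \<Longrightarrow> ff_assign J j = asgk J k j"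
  using stable[of k "length J" J] by (simp add: ff_assign_eq)

lemma fitsset_cong: "(\<forall>j\<in>P. f j = g j) \<Longrightarrow> fitsset J P f n i = fitsset J P g n i"
proof -
  assume h: "\<forall>j\<in>P. f j = g j"
  have o: "bin_is_open J P f b t = bin_is_open J P g b t" for b t
    unfolding bin_is_open_def using h by auto
  have l: "bin_load J P f b t = bin_load J P g b t" for b t
    unfolding bin_load_def using h by (intro sum.cong) auto
  show ?thesis unfolding fitsset_def o l ..
qed

lemma A_step:
  assumes k: "k < length J"
  shows "ff_assign J (ff_order J ! k) =
    (if fitsset J (Pk J k) (ff_assign J) (nk J k) (ff_order J ! k) \<noteq> {}
     then Min (fitsset J (Pk J k) (ff_assign J) (nk J k) (ff_order J ! k)) else nk J k)"
proof -
  have "ff_order J ! k \<in> Pk J (Suc k)" using k by (simp add: stk_Suc_parts(2))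
  then have "ff_assign J (ff_order J ! k) = asgk J (Suc k) (ff_order J ! k)"
    using A_agree[of "Suc k" J] k by simp
  moreover have "fitsset J (Pk J k) (ff_assign J) (nk J k) (ff_order J ! k) = fitsset J (Pk J k) (asgk J k) (nk J k) (ff_order J ! k)"
    using A_agree[of k J] k by (intro fitsset_cong) simp
  ultimately show ?thesis by (simp add: stk_Suc_parts(1)[OF k])
qed

lemma A_le: "k < length J \<Longrightarrow> ff_assign J (ff_order J ! k) \<le> nk J k"
  unfolding A_step by (rule asg_val_lt)

lemma K1:
  assumes k: "k < length J" and x: "x = ff_order J ! k" and b: "b < ff_assign J x"
    and op: "bin_is_open J (Pk J k) (ff_assign J) b (arr (J ! x))"
  shows "bin_load J (Pk J k) (ff_assign J) b (arr (J ! x)) + sz (J ! x) > 1"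
proof (rule ccontr)
  assume "\<not> ?thesis"
  moreover have "b < nk J k" using A_le[OF k] b x by simp
  ultimately have bin: "b \<in> fitsset J (Pk J k) (ff_assign J) (nk J k) x" using op by (simp add: fitsset_def)
  then have ne: "fitsset J (Pk J k) (ff_assign J) (nk J k) x \<noteq> {}" by blast
  have "Min (fitsset J (Pk J k) (ff_assign J) (nk J k) x) \<le> b" using bin fitsset_finite by (rule Min_le[rotated])
  then show False using A_step[OF k] ne b x by simp
qed

lemma K2:
  assumes k: "k < length J" and y: "y = ff_order J ! k" and lt: "ff_assign J y < nk J k"
  shows "bin_is_open J (Pk J k) (ff_assign J) (ff_assign J y) (arr (J ! y))"
proof -
  have ne: "fitsset J (Pk J k) (ff_assign J) (nk J k) y \<noteq> {}"
    using A_step[OF k] lt y by (cases "fitsset J (Pk J k) (ff_assign J) (nk J k) y = {}") auto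
  then have "Min (fitsset J (Pk J k) (ff_assign J) (nk J k) y) \<in> fitsset J (Pk J k) (ff_assign J) (nk J k) y"
    by (rule Min_in[OF fitsset_finite])
  then show ?thesis using A_step[OF k] ne y by (simp add: fitsset_def)
qed

lemma in_take_ord: "k' < k \<Longrightarrow> k \<le> length J \<Longrightarrow> ff_order J ! k' \<in> set (take k (ff_order J))"
proof -
  assume a: "k' < k" "k \<le> length J"
  then have "k' < length (take k (ff_order J))" by simp
  then have "take k (ff_order J) ! k' \<in> set (take k (ff_order J))" by (rule nth_mem)
  then show ?thesis using a by simp
qed

lemma in_Pk_ord: "k \<le> length J \<Longrightarrow> j \<in> Pk J k \<Longrightarrow> \<exists>k'<k. j = ff_order J ! k'"
  using inv1[of k J] by (auto simp: in_set_conv_nth)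

lemma K3:
  assumes k: "k < length J" and x: "x = ff_order J ! k" and b: "b < ff_assign J x"
  shows "k' < length J \<Longrightarrow> ff_assign J (ff_order J ! k') = b \<Longrightarrow> present J (ff_order J ! k') t
     \<Longrightarrow> arr (J ! x) \<le> t \<Longrightarrow> bin_is_open J (Pk J k) (ff_assign J) b (arr (J ! x))"
proof (induction k' arbitrary: t rule: less_induct)
  case (less k')
  define y where "y = ff_order J ! k'"
  consider "k' < k" | "k' = k" | "k < k'" by linarith
  then show ?case
  proof cases
    case 1
    have yP: "y \<in> Pk J k" using inv1[of k J] k in_take_ord[OF 1, of J] y_def by simp
    have "arr (J ! y) \<le> arr (J ! x)" using ord_mono[of k' k J] 1 k x y_def by simp
    then have "present J y (arr (J ! x))" using less.prems y_def by (auto simp: present_def)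
    then show ?thesis unfolding bin_is_open_def using yP less.prems y_def by blast
  next
    case 2 then show ?thesis using less.prems b x by simp
  next
    case 3
    have "nk J k \<le> nk J k'" using stable[of k k' J] 3 less.prems by simp
    then have "ff_assign J y < nk J k'" using A_le[OF k] b x less.prems y_def by simp
    then have "bin_is_open J (Pk J k') (ff_assign J) (ff_assign J y) (arr (J ! y))"
      using K2[OF less.prems(1) y_def] by simp
    then obtain j where j: "j \<in> Pk J k'" "ff_assign J j = b" "present J j (arr (J ! y))"
      unfolding bin_is_open_def using less.prems y_def by auto
    obtain k'' where k'': "k'' < k'" "j = ff_order J ! k''" using in_Pk_ord[OF _ j(1)] less.prems by auto
    have "arr (J ! x) \<le> arr (J ! y)" using ord_mono[of k k' J] 3 less.prems x y_def by simp
    then show ?thesis using less.IH[OF k''(1), of "arr (J ! y)"] k'' j less.prems by simp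
  qed
qed

lemma count_bound:
  assumes sz0: "\<forall>it\<in>set J. 0 \<le> sz it" and Dd: "\<forall>it\<in>set J. dur it \<le> D" and D0: "0 \<le> D"
  shows "real (ff_open_bins J t) \<le> (if \<exists>i. present J i t then 1 else 0)
     + 2 * (\<Sum>j<length J. sz (J!j) * indicator {arr (J!j)..<arr (J!j) + dur (J!j) + D} t)"
proof -
  define N where "N = length J"
  define A where "A = ff_assign J"
  define B where "B = {b. \<exists>i<N. A i = b \<and> present J i t}"
  define Near where "Near = {j. j < N \<and> arr (J!j) \<le> t \<and> t < arr (J!j) + dur (J!j) + D}"
  define S where "S = (\<Sum>j\<in>Near. sz (J!j))"
  have s0: "0 \<le> sz (J!j)" if "j < N" for j using sz0 that N_def by auto
  have d0: "dur (J!j) \<le> D" if "j < N" for j using Dd that N_def by auto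
  have finB: "finite B" by (rule finite_subset[of _ "A ` {..<N}"]) (auto simp: B_def)
  have finN: "finite Near" by (rule finite_subset[of _ "{..<N}"]) (auto simp: Near_def)
  have S0: "0 \<le> S" unfolding S_def using s0 by (intro sum_nonneg) (auto simp: Near_def)
  have sumeq: "(\<Sum>j<N. sz (J!j) * indicator {arr (J!j)..<arr (J!j) + dur (J!j) + D} t) = S"
  proof -
    have "(\<Sum>j<N. sz (J!j) * indicator {arr (J!j)..<arr (J!j) + dur (J!j) + D} t)
        = (\<Sum>j\<in>Near. sz (J!j) * indicator {arr (J!j)..<arr (J!j) + dur (J!j) + D} t)"
      by (rule sum.mono_neutral_right) (auto simp: Near_def indicator_def)
    also have "\<dots> = S" unfolding S_def by (rule sum.cong) (auto simp: Near_def indicator_def)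
    finally show ?thesis .
  qed
  have obins: "ff_open_bins J t = card B" unfolding ff_open_bins_def B_def A_def N_def ..
  show ?thesis
  proof (cases "B = {}")
    case True
    then show ?thesis using obins sumeq S0 N_def by simp
  next
    case False
    then obtain i where i: "i < N" "present J i t" unfolding B_def by auto
    define m where "m = Min B"
    define B' where "B' = B - {m}"
    have mB: "m \<in> B" using Min_in[OF finB False] m_def by simp
    have cardB: "card B = Suc (card B')" unfolding B'_def using mB finB
      by (metis card_Suc_Diff1)
    have finB': "finite B'" using finB B'_def by simp
    define pred where "pred b = Max {b'\<in>B. b' < b}" for b
    define xf where "xf b = (SOME i. i < N \<and> A i = b \<and> present J i t)" for b
    have xf: "xf b < N \<and> A (xf b) = b \<and> present J (xf b) t" if "b \<in> B" for b
    proof -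
      have "\<exists>i. i < N \<and> A i = b \<and> present J i t" using that B_def by auto
      then show ?thesis unfolding xf_def by (rule someI_ex)
    qed
    have predP: "pred b \<in> B \<and> pred b < b \<and> (\<forall>b'\<in>B. b' < b \<longrightarrow> b' \<le> pred b)" if "b \<in> B'" for b
    proof -
      have ne: "{b'\<in>B. b' < b} \<noteq> {}" using that mB finB unfolding B'_def m_def
        by (metis (mono_tags, lifting) Diff_iff Min_le empty_iff insert_iff mem_Collect_eq nat_less_le)
      have fin: "finite {b'\<in>B. b' < b}" using finB by simp
      show ?thesis using Max_in[OF fin ne] Max_ge[OF fin] unfolding pred_def by auto
    qed
    have predinj: "inj_on pred B'"
    proof (rule inj_onI)
      fix b1 b2 assume b: "b1 \<in> B'" "b2 \<in> B'" "pred b1 = pred b2"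
      have B1: "b1 \<in> B" "b2 \<in> B" using b B'_def by auto
      show "b1 = b2"
      proof (rule ccontr)
        assume "b1 \<noteq> b2"
        then consider "b1 < b2" | "b2 < b1" by linarith
        then show False
        proof cases
          case 1 then show False using predP[OF b(2)] predP[OF b(1)] B1 b(3) by fastforce
        next
          case 2 then show False using predP[OF b(2)] predP[OF b(1)] B1 b(3) by fastforce
        qed
      qed
    qed
    have xinj: "inj_on xf B'"
      by (rule inj_onI) (metis xf B'_def DiffD1)
    have key: "1 < (\<Sum>j\<in>Near. if A j = pred b then sz (J!j) else 0) + sz (J ! xf b)" if bB: "b \<in> B'" for b
    proof -
      have bB0: "b \<in> B" using bB B'_def by simp
      define x where "x = xf b"
      have x: "x < N" "A x = b" "present J x t" using xf[OF bB0] x_def by auto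
      obtain k where k: "k < N" "x = ff_order J ! k"
        using x(1) set_ord[of J] N_def by (metis atLeastLessThan_iff in_set_conv_nth len_ord zero_le)
      have pb: "pred b \<in> B" "pred b < A x" using predP[OF bB] x by auto
      obtain y where y: "y < N" "A y = pred b" "present J y t" using pb(1) B_def by auto
      obtain k' where k': "k' < N" "y = ff_order J ! k'"
        using y(1) set_ord[of J] N_def by (metis atLeastLessThan_iff in_set_conv_nth len_ord zero_le)
      have axt: "arr (J ! x) \<le> t" using x(3) by (simp add: present_def)
      have op: "bin_is_open J (Pk J k) A (pred b) (arr (J ! x))"
        using K3[of k J x "pred b" k' t] k k' pb y axt N_def A_def by simp
      have gt: "bin_load J (Pk J k) A (pred b) (arr (J ! x)) + sz (J ! x) > 1"
        using K1[of k J x "pred b"] k pb op N_def A_def by simp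
      have PkN: "Pk J k \<subseteq> {..<N}" using inv1[of k J] k N_def set_ord[of J]
        by (auto dest: in_set_takeD)
      have tx: "t < arr (J ! x) + D" using x(3) d0[OF x(1)] by (simp add: present_def)
      have "bin_load J (Pk J k) A (pred b) (arr (J ! x))
          = (\<Sum>j\<in>Pk J k \<inter> Near. if A j = pred b \<and> present J j (arr (J ! x)) then sz (J ! j) else 0)"
        unfolding bin_load_def
      proof (rule sum.mono_neutral_right)
        show "finite (Pk J k)" using PkN finite_subset by blast
        show "\<forall>i\<in>Pk J k - Pk J k \<inter> Near. (if A i = pred b \<and> present J i (arr (J ! x)) then sz (J ! i) else 0) = 0"
          using axt tx PkN by (auto simp: Near_def present_def)
      qed auto
      also have "\<dots> \<le> (\<Sum>j\<in>Pk J k \<inter> Near. if A j = pred b then sz (J ! j) else 0)"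
        by (rule sum_mono) (auto simp: Near_def intro: s0)
      also have "\<dots> \<le> (\<Sum>j\<in>Near. if A j = pred b then sz (J ! j) else 0)"
        by (rule sum_mono2[OF finN]) (auto simp: Near_def intro: s0)
      finally show ?thesis using gt x_def by simp
    qed
    have "real (card B') = (\<Sum>b\<in>B'. 1)" by simp
    also have "\<dots> \<le> (\<Sum>b\<in>B'. (\<Sum>j\<in>Near. if A j = pred b then sz (J!j) else 0) + sz (J ! xf b))"
      by (rule sum_mono) (use key in \<open>auto intro: less_imp_le\<close>)
    also have "\<dots> = (\<Sum>j\<in>Near. \<Sum>b\<in>B'. if A j = pred b then sz (J!j) else 0) + (\<Sum>b\<in>B'. sz (J ! xf b))"
      by (simp add: sum.distrib sum.swap[of _ B'])
    also have "\<dots> \<le> S + S"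
    proof (rule add_mono)
      have "(\<Sum>b\<in>B'. if A j = pred b then sz (J!j) else 0) \<le> sz (J!j)" if "j \<in> Near" for j
      proof -
        have "(\<Sum>b\<in>B'. if A j = pred b then sz (J!j) else 0) = (\<Sum>p\<in>pred ` B'. if A j = p then sz (J!j) else 0)"
          by (simp add: sum.reindex[OF predinj])
        also have "\<dots> = (if A j \<in> pred ` B' then sz (J!j) else 0)"
          using finB' by (simp add: sum.delta)
        also have "\<dots> \<le> sz (J!j)" using s0 that Near_def by auto
        finally show ?thesis .
      qed
      then show "(\<Sum>j\<in>Near. \<Sum>b\<in>B'. if A j = pred b then sz (J!j) else 0) \<le> S"
        unfolding S_def by (rule sum_mono)
      have "(\<Sum>b\<in>B'. sz (J ! xf b)) = (\<Sum>j\<in>xf ` B'. sz (J ! j))" by (simp add: sum.reindex[OF xinj])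
      also have "\<dots> \<le> S" unfolding S_def
      proof (rule sum_mono2[OF finN])
        show "xf ` B' \<subseteq> Near"
        proof
          fix j assume "j \<in> xf ` B'"
          then obtain b where b: "b \<in> B'" "j = xf b" by auto
          then have "j < N" "present J j t" using xf B'_def by auto
          then show "j \<in> Near" using D0 by (auto simp: Near_def present_def)
        qed
      qed (use s0 Near_def in auto)
      finally show "(\<Sum>b\<in>B'. sz (J ! xf b)) \<le> S" .
    qed
    finally have "real (card B') \<le> 2 * S" by simp
    then show ?thesis using obins cardB sumeq i N_def by auto
  qed
qed

lemma FF_bound_idx:
  assumes sz0: "\<forall>it\<in>set J. 0 \<le> sz it" and Dd: "\<forall>it\<in>set J. dur it \<le> D" and D0: "0 \<le> D"
    and dur0: "\<forall>it\<in>set J. 0 \<le> dur it"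
  shows "FirstFit J \<le> emeasure lborel (\<Union>j<length J. {arr (J!j)..<arr (J!j) + dur (J!j)})
     + (\<Sum>j<length J. ennreal (2 * sz (J!j)) * ennreal (dur (J!j) + D))"
proof -
  define N where "N = length J"
  define U where "U = (\<Union>j<N. {arr (J!j)..<arr (J!j) + dur (J!j)})"
  define I where "I j = {arr (J!j)..<arr (J!j) + dur (J!j) + D}" for j
  have s0: "0 \<le> sz (J!j)" if "j < N" for j using sz0 that N_def by auto
  have pt: "ennreal (real (ff_open_bins J t)) \<le> indicator U t + (\<Sum>j<N. ennreal (2 * sz (J!j)) * indicator (I j) t)" for t
  proof -
    have ind: "(if \<exists>i. present J i t then 1 else 0) = (indicator U t :: real)"
      by (auto simp: present_def indicator_def U_def N_def)
    have r: "real (ff_open_bins J t) \<le> indicator U t + (\<Sum>j<N. 2 * sz (J!j) * indicator (I j) t)"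
    proof -
      have e: "2 * (\<Sum>j<N. sz (J!j) * indicator (I j) t) = (\<Sum>j<N. 2 * sz (J!j) * indicator (I j) t)"
        by (simp only: sum_distrib_left mult.assoc)
      show ?thesis using count_bound[OF sz0 Dd D0, of t] unfolding ind N_def[symmetric] I_def[symmetric] e .
    qed
    have nn: "0 \<le> 2 * sz (J!j) * indicator (I j) t" if "j \<in> {..<N}" for j
      using s0 that by simp
    have "ennreal (real (ff_open_bins J t)) \<le> ennreal (indicator U t + (\<Sum>j<N. 2 * sz (J!j) * indicator (I j) t))"
      using r by (rule ennreal_leI)
    also have "\<dots> = indicator U t + (\<Sum>j<N. ennreal (2 * sz (J!j) * indicator (I j) t))"
    proof -
      have a: "0 \<le> (\<Sum>j<N. 2 * sz (J!j) * indicator (I j) t)" using nn by (rule sum_nonneg)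
      have b: "ennreal (\<Sum>j<N. 2 * sz (J!j) * indicator (I j) t) = (\<Sum>j<N. ennreal (2 * sz (J!j) * indicator (I j) t))"
        using nn by (rule sum_ennreal[symmetric])
      show ?thesis using a b by (simp only: ennreal_plus[OF _ a] ennreal_indicator indicator_pos_le)
    qed
    also have "\<dots> = indicator U t + (\<Sum>j<N. ennreal (2 * sz (J!j)) * indicator (I j) t)"
      using s0 by (intro arg_cong2[where f="(+)"] sum.cong refl) (simp add: ennreal_mult ennreal_indicator)
    finally show ?thesis .
  qed
  have mU: "U \<in> sets lborel" unfolding U_def by measurable
  have "FirstFit J \<le> (\<integral>\<^sup>+ t. ennreal (real (ff_open_bins J t)) \<partial>lborel)"
    unfolding FirstFit_def by (intro nn_integral_mono) (auto simp: indicator_def)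
  also have "\<dots> \<le> (\<integral>\<^sup>+ t. indicator U t + (\<Sum>j<N. ennreal (2 * sz (J!j)) * indicator (I j) t) \<partial>lborel)"
    by (intro nn_integral_mono pt)
  also have "\<dots> = (\<integral>\<^sup>+ t. indicator U t \<partial>lborel) + (\<integral>\<^sup>+ t. (\<Sum>j<N. ennreal (2 * sz (J!j)) * indicator (I j) t) \<partial>lborel)"
  proof (rule nn_integral_add)
    show "(\<lambda>t. indicator U t) \<in> borel_measurable lborel" using mU by simp
    show "(\<lambda>t. \<Sum>j<N. ennreal (2 * sz (J!j)) * indicator (I j) t) \<in> borel_measurable lborel"
      unfolding I_def by measurable
  qed
  also have "(\<integral>\<^sup>+ t. (\<Sum>j<N. ennreal (2 * sz (J!j)) * indicator (I j) t) \<partial>lborel)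
       = (\<Sum>j<N. (\<integral>\<^sup>+ t. ennreal (2 * sz (J!j)) * indicator (I j) t \<partial>lborel))"
    by (rule nn_integral_sum) (auto simp: I_def)
  also have "\<dots> = (\<Sum>j<N. ennreal (2 * sz (J!j)) * ennreal (dur (J!j) + D))"
  proof (rule sum.cong[OF refl])
    fix j assume j: "j \<in> {..<N}"
    have "0 \<le> dur (J!j)" using dur0 j N_def by auto
    then show "(\<integral>\<^sup>+ t. ennreal (2 * sz (J!j)) * indicator (I j) t \<partial>lborel) = ennreal (2 * sz (J!j)) * ennreal (dur (J!j) + D)"
      using D0 by (simp add: nn_integral_cmult_indicator I_def)
  qed
  finally show ?thesis by (simp add: U_def N_def)
qed

lemma em_Ico: "emeasure lborel {p..<q::real} = ennreal (q - p)"
  by (cases "p \<le> q") (auto simp: ennreal_neg)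

lemma stretch:
  fixes a d :: "'i \<Rightarrow> real"
  assumes fin: "finite S" and lam: "1 \<le> lam"
  shows "emeasure lborel (\<Union>i\<in>S. {a i..<a i + lam * d i}) \<le> ennreal lam * emeasure lborel (\<Union>i\<in>S. {a i..<a i + d i})"
  using fin
proof (induction S rule: finite_ranking_induct[where f = a])
  case empty then show ?case by simp
next
  case (insert x S)
  define U1 where "U1 = (\<Union>i\<in>S. {a i..<a i + d i})"
  define UL where "UL = (\<Union>i\<in>S. {a i..<a i + lam * d i})"
  define c where "c = Max (insert (a x) ((\<lambda>i. a i + d i) ` S))"
  define b where "b = a x + d x"
  have finc: "finite (insert (a x) ((\<lambda>i. a i + d i) ` S))" using insert by simp
  have cx: "a x \<le> c" unfolding c_def using finc by (intro Max_ge) auto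
  have U1c: "U1 \<subseteq> {..<c}"
  proof
    fix t assume "t \<in> U1"
    then obtain i where i: "i \<in> S" "a i \<le> t" "t < a i + d i" unfolding U1_def by auto
    have "a i + d i \<le> c" unfolding c_def using finc i by (intro Max_ge) auto
    then show "t \<in> {..<c}" using i by simp
  qed
  have mU1: "U1 \<in> sets lborel" unfolding U1_def using insert.hyps(1) by (intro sets.finite_UN) auto
  have mUL: "UL \<in> sets lborel" unfolding UL_def using insert.hyps(1) by (intro sets.finite_UN) auto
  have sub: "{a x..<a x + lam * (c - a x)} \<subseteq> UL"
  proof (cases "c = a x")
    case True then show ?thesis by simp
  next
    case False
    have "c \<in> insert (a x) ((\<lambda>i. a i + d i) ` S)" unfolding c_def using finc by (intro Max_in) auto
    then obtain y where y: "y \<in> S" "c = a y + d y" using False by auto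
    have ay: "a y \<le> a x" using insert.hyps(2) y(1) by simp
    show ?thesis
    proof
      fix t assume t: "t \<in> {a x..<a x + lam * (c - a x)}"
      have "a x + lam * (c - a x) \<le> a y + lam * d y"
      proof -
        have "(a x - a y) \<le> lam * (a x - a y)" using ay lam by (simp add: mult_le_cancel_right1)
        then show ?thesis using y(2) by (simp add: algebra_simps)
      qed
      then have "t \<in> {a y..<a y + lam * d y}" using t ay by auto
      then show "t \<in> UL" unfolding UL_def using y(1) by blast
    qed
  qed
  have "(\<Union>i\<in>insert x S. {a i..<a i + lam * d i}) \<subseteq> UL \<union> {a x + lam * (c - a x)..<a x + lam * d x}"
    using sub unfolding UL_def by auto
  then have "emeasure lborel (\<Union>i\<in>insert x S. {a i..<a i + lam * d i})
      \<le> emeasure lborel (UL \<union> {a x + lam * (c - a x)..<a x + lam * d x})"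
    by (intro emeasure_mono) (use mUL in auto)
  also have "\<dots> \<le> emeasure lborel UL + emeasure lborel {a x + lam * (c - a x)..<a x + lam * d x}"
    by (rule emeasure_subadditive) (use mUL in auto)
  also have "emeasure lborel {a x + lam * (c - a x)..<a x + lam * d x} = ennreal lam * ennreal (b - c)"
    unfolding em_Ico b_def using lam by (simp add: ennreal_mult'[symmetric] algebra_simps)
  also have "emeasure lborel UL \<le> ennreal lam * emeasure lborel U1" using insert.IH unfolding UL_def U1_def .
  also have "ennreal lam * emeasure lborel U1 + ennreal lam * ennreal (b - c) = ennreal lam * (emeasure lborel U1 + emeasure lborel {c..<b})"
    by (simp add: em_Ico distrib_left)
  also have "emeasure lborel U1 + emeasure lborel {c..<b} = emeasure lborel (U1 \<union> {c..<b})"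
    by (rule plus_emeasure) (use mU1 U1c in auto)
  also have "emeasure lborel (U1 \<union> {c..<b}) \<le> emeasure lborel (\<Union>i\<in>insert x S. {a i..<a i + d i})"
  proof (intro emeasure_mono)
    show "(\<Union>i\<in>insert x S. {a i..<a i + d i}) \<in> sets lborel"
      using insert.hyps(1) by (intro sets.finite_UN) auto
  qed (use cx in \<open>auto simp: U1_def b_def\<close>)
  finally show ?case by (simp add: mult_left_mono)
qed

lemma OPT_at_prop:
  assumes v: "valid_instance J"
  shows "\<exists>f :: nat \<Rightarrow> nat. (\<forall>i. present J i t \<longrightarrow> f i < OPT_at J t) \<and>
       (\<forall>b<OPT_at J t. (\<Sum>i\<in>{i. present J i t \<and> f i = b}. sz (J ! i)) \<le> 1)"
  unfolding OPT_at_def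
proof (rule LeastI_ex)
  show "\<exists>(k::nat) (f::nat\<Rightarrow>nat). (\<forall>i. present J i t \<longrightarrow> f i < k) \<and> (\<forall>b<k. (\<Sum>i\<in>{i. present J i t \<and> f i = b}. sz (J ! i)) \<le> 1)"
  proof -
    have 1: "\<forall>i. present J i t \<longrightarrow> id i < length J" by (simp add: present_def)
    have 2: "\<forall>b<length J. (\<Sum>i\<in>{i. present J i t \<and> id i = b}. sz (J ! i)) \<le> 1"
    proof (intro allI impI)
      fix b assume b: "b < length J"
      have "{i. present J i t \<and> id i = b} \<subseteq> {b}" by auto
      then have "(\<Sum>i\<in>{i. present J i t \<and> id i = b}. sz (J ! i)) \<le> (\<Sum>i\<in>{b}. sz (J ! i))"
        using v b by (intro sum_mono2) (auto simp: valid_instance_def)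
      also have "\<dots> \<le> 1" using v b by (simp add: valid_instance_def)
      finally show "(\<Sum>i\<in>{i. present J i t \<and> id i = b}. sz (J ! i)) \<le> 1" .
    qed
    show ?thesis by (rule exI, rule exI, rule conjI[OF 1 2])
  qed
qed

lemma OPT_at_ge1: "valid_instance J \<Longrightarrow> present J i t \<Longrightarrow> 1 \<le> OPT_at J t"
  using OPT_at_prop[of J t] by fastforce

lemma OPT_at_ge_vol:
  assumes v: "valid_instance J"
  shows "(\<Sum>i<length J. sz (J!i) * indicator {arr (J!i)..<arr (J!i) + dur (J!i)} t) \<le> real (OPT_at J t)"
proof -
  obtain f where f: "\<forall>i. present J i t \<longrightarrow> f i < OPT_at J t"
    "\<forall>b<OPT_at J t. (\<Sum>i\<in>{i. present J i t \<and> f i = b}. sz (J ! i)) \<le> 1"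
    using OPT_at_prop[OF v, of t] by blast
  define Pr where "Pr = {i. present J i t}"
  have finPr: "finite Pr" by (rule finite_subset[of _ "{..<length J}"]) (auto simp: Pr_def present_def)
  have "(\<Sum>i<length J. sz (J!i) * indicator {arr (J!i)..<arr (J!i) + dur (J!i)} t) = (\<Sum>i\<in>Pr. sz (J!i))"
  proof -
    have "(\<Sum>i<length J. sz (J!i) * indicator {arr (J!i)..<arr (J!i) + dur (J!i)} t)
        = (\<Sum>i\<in>Pr. sz (J!i) * indicator {arr (J!i)..<arr (J!i) + dur (J!i)} t)"
      by (rule sum.mono_neutral_right) (auto simp: Pr_def present_def indicator_def)
    also have "\<dots> = (\<Sum>i\<in>Pr. sz (J!i))" by (rule sum.cong) (auto simp: Pr_def present_def indicator_def)
    finally show ?thesis .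
  qed
  also have "\<dots> = (\<Sum>b\<in>{..<OPT_at J t}. \<Sum>i\<in>{i\<in>Pr. f i = b}. sz (J!i))"
    by (rule sum.group[symmetric]) (use finPr f(1) Pr_def in auto)
  also have "\<dots> \<le> (\<Sum>b\<in>{..<OPT_at J t}. 1)"
    by (rule sum_mono) (use f(2) in \<open>auto simp: Pr_def\<close>)
  finally show ?thesis by simp
qed

lemma OPT_ge_span:
  assumes v: "valid_instance J"
  shows "emeasure lborel (\<Union>it\<in>set J. {arr it..<arr it + dur it}) \<le> OPT J"
proof -
  define U where "U = (\<Union>it\<in>set J. {arr it..<arr it + dur it})"
  have mU: "U \<in> sets lborel" unfolding U_def by (intro sets.finite_UN) auto
  have "emeasure lborel U = (\<integral>\<^sup>+ t. indicator U t \<partial>lborel)" using mU by simp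
  also have "\<dots> \<le> OPT J" unfolding OPT_def
  proof (intro nn_integral_mono)
    fix t show "indicator U t \<le> ennreal (real (OPT_at J t)) * indicator {0..} t"
    proof (cases "t \<in> U")
      case True
      then obtain it where it: "it \<in> set J" "arr it \<le> t" "t < arr it + dur it" unfolding U_def by auto
      then obtain i where i: "i < length J" "J ! i = it" by (auto simp: in_set_conv_nth)
      have "present J i t" using i it by (simp add: present_def)
      then have "1 \<le> OPT_at J t" by (rule OPT_at_ge1[OF v])
      moreover have "0 \<le> t" using it v by (auto simp: valid_instance_def)
      ultimately show ?thesis using True by (simp add: indicator_def)
    qed simp
  qed
  finally show ?thesis unfolding U_def .
qed

lemma OPT_ge_vol:
  assumes v: "valid_instance J"
  shows "ennreal (sum_list (map (\<lambda>it. sz it * dur it) J)) \<le> OPT J"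
proof -
  define I where "I i = {arr (J!i)..<arr (J!i) + dur (J!i)}" for i
  have s0: "0 \<le> sz (J!i)" "0 \<le> dur (J!i)" "0 \<le> arr (J!i)" if "i < length J" for i
    using v nth_mem[OF that] by (auto simp: valid_instance_def less_imp_le)
  have "sum_list (map (\<lambda>it. sz it * dur it) J) = (\<Sum>i<length J. sz (J!i) * dur (J!i))"
    by (simp add: sum_list_sum_nth atLeast0LessThan)
  then have "ennreal (sum_list (map (\<lambda>it. sz it * dur it) J)) = (\<Sum>i<length J. ennreal (sz (J!i)) * emeasure lborel (I i))"
  proof -
    have "ennreal (\<Sum>i<length J. sz (J!i) * dur (J!i)) = (\<Sum>i<length J. ennreal (sz (J!i) * dur (J!i)))"
      using s0 by (intro sum_ennreal[symmetric]) simp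
    also have "\<dots> = (\<Sum>i<length J. ennreal (sz (J!i)) * emeasure lborel (I i))"
      using s0 by (intro sum.cong refl) (simp add: I_def ennreal_mult)
    finally show ?thesis by (simp add: \<open>sum_list (map (\<lambda>it. sz it * dur it) J) = (\<Sum>i<length J. sz (J!i) * dur (J!i))\<close>)
  qed
  also have "\<dots> = (\<Sum>i<length J. \<integral>\<^sup>+ t. ennreal (sz (J!i)) * indicator (I i) t \<partial>lborel)"
    by (simp add: nn_integral_cmult_indicator I_def)
  also have "\<dots> = (\<integral>\<^sup>+ t. (\<Sum>i<length J. ennreal (sz (J!i)) * indicator (I i) t) \<partial>lborel)"
    by (rule nn_integral_sum[symmetric]) (auto simp: I_def)
  also have "\<dots> \<le> OPT J" unfolding OPT_def
  proof (intro nn_integral_mono)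
    fix t
    have eq: "(\<Sum>i<length J. ennreal (sz (J!i)) * indicator (I i) t) = ennreal (\<Sum>i<length J. sz (J!i) * indicator (I i) t)"
    proof -
      have "(\<Sum>i<length J. ennreal (sz (J!i)) * indicator (I i) t) = (\<Sum>i<length J. ennreal (sz (J!i) * indicator (I i) t))"
        using s0 by (intro sum.cong refl) (simp add: ennreal_mult ennreal_indicator)
      also have "\<dots> = ennreal (\<Sum>i<length J. sz (J!i) * indicator (I i) t)"
        using s0 by (intro sum_ennreal) simp
      finally show ?thesis .
    qed
    show "(\<Sum>i<length J. ennreal (sz (J!i)) * indicator (I i) t) \<le> ennreal (real (OPT_at J t)) * indicator {0..} t"
    proof (cases "0 \<le> t")
      case True
      have "ennreal (\<Sum>i<length J. sz (J!i) * indicator (I i) t) \<le> ennreal (real (OPT_at J t))"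
        using OPT_at_ge_vol[OF v, of t] unfolding I_def by (rule ennreal_leI)
      then show ?thesis using True eq by simp
    next
      case False
      have "\<forall>i<length J. t \<notin> I i"
      proof (intro allI impI)
        fix i assume i: "i < length J"
        show "t \<notin> I i" using s0(3)[OF i] False by (simp add: I_def)
      qed
      then show ?thesis by simp
    qed
  qed
  finally show ?thesis .
qed

lemma mig_iff: "mig_time C it j < arr it + dur it + real j * C \<longleftrightarrow> sqrt C * (real j + 1) < dur it"
  by (simp add: mig_time_def algebra_simps)

lemma nm_props:
  assumes C: "1 \<le> C" and d: "0 < dur it"
  shows "dur it \<le> sqrt C * (real (num_mig C it) + 1)" "sqrt C * real (num_mig C it) < dur it"
proof -
  have nm: "num_mig C it = (LEAST j. \<not> sqrt C * (real j + 1) < dur it)"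
    unfolding num_mig_def mig_iff ..
  have sc: "0 < sqrt C" using C by simp
  obtain n :: nat where n: "dur it / sqrt C < real n" using reals_Archimedean2 by blast
  then have "dur it < sqrt C * real n" using sc by (simp add: field_simps)
  moreover have "sqrt C * (real n + 1) = sqrt C * real n + sqrt C" by (simp add: algebra_simps)
  ultimately have ex: "\<not> sqrt C * (real n + 1) < dur it" using sc by linarith
  show "dur it \<le> sqrt C * (real (num_mig C it) + 1)"
    using LeastI[of "\<lambda>j. \<not> sqrt C * (real j + 1) < dur it", OF ex] nm by simp
  show "sqrt C * real (num_mig C it) < dur it"
  proof (cases "num_mig C it")
    case 0 then show ?thesis using d by simp
  next
    case (Suc k)
    then have "k < (LEAST j. \<not> sqrt C * (real j + 1) < dur it)" using nm by simp
    then have "sqrt C * (real k + 1) < dur it" by (rule not_less_Least[THEN notnotD])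
    then show ?thesis using Suc by (simp add: add.commute)
  qed
qed

lemma part_props:
  assumes C: "1 \<le> C" and d: "0 < dur it" and p: "p \<in> set (big_parts_item C it)"
  shows "sz p = sz it \<and> 0 \<le> dur p \<and> dur p \<le> C + sqrt C \<and> arr it \<le> arr p \<and>
         arr p + dur p \<le> arr it + (1 + sqrt C) * dur it"
proof -
  define m where "m = num_mig C it"
  define sc where "sc = sqrt C"
  define a where "a = arr it"
  define dd where "dd = dur it"
  have sc1: "1 \<le> sc" using C sc_def by simp
  have scC: "sc * sc = C" using C sc_def by simp
  have N1: "dd \<le> sc * (real m + 1)" and N2: "sc * real m < dd"
    using nm_props[OF C d] m_def sc_def dd_def by auto
  obtain j where j: "j < m" and pj: "p = (mig_time C it j, sz it,
      (if Suc j < m then mig_time C it (Suc j) else alg3_departure C it) - mig_time C it j)"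
    using p unfolding big_parts_item_def m_def by auto
  have mt: "mig_time C it k = a + sc + real k * (C + sc)" for k by (simp add: mig_time_def a_def sc_def)
  have dep: "alg3_departure C it = a + dd + real m * C" by (simp add: alg3_departure_def a_def dd_def m_def)
  have mC: "real m * C \<le> dd * sc"
  proof -
    have "real m * C = (sc * real m) * sc" using scC by (simp add: algebra_simps)
    also have "\<dots> \<le> dd * sc" using N2 sc1 by (intro mult_right_mono) auto
    finally show ?thesis .
  qed
  have arrp: "arr p = a + sc + real j * (C + sc)" using pj mt by (simp add: arr_def)
  have szp: "sz p = sz it" using pj by (simp add: sz_def)
  have Cnn: "0 \<le> C" using C by simp
  have arrge: "a \<le> arr p" using arrp sc1 Cnn by simp
  show ?thesis
  proof (cases "Suc j < m")
    case True
    have durp: "dur p = C + sc" using pj True mt by (simp add: dur_def algebra_simps)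
    have jm: "real j + 2 \<le> real m" using True by linarith
    have "arr p + dur p = sc * (real j + 2) + (real j + 1) * C + a" using arrp durp by (simp add: algebra_simps)
    also have "\<dots> \<le> sc * real m + real m * C + a"
    proof -
      have "sc * (real j + 2) \<le> sc * real m" using jm sc1 by (intro mult_left_mono) auto
      moreover have "(real j + 1) * C \<le> real m * C" using jm Cnn by (intro mult_right_mono) auto
      ultimately show ?thesis by simp
    qed
    also have "\<dots> \<le> a + (1 + sc) * dd" using N2 mC by (simp add: algebra_simps)
    finally show ?thesis using durp szp arrge sc1 Cnn by (simp add: a_def dd_def sc_def)
  next
    case False
    then have jm: "real j = real m - 1" using j by linarith
    have durp: "dur p = dd + C - sc * real m" using pj False mt dep jm by (simp add: dur_def algebra_simps)
    have "arr p + dur p = a + dd + real m * C" using arrp durp jm by (simp add: algebra_simps)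
    also have "\<dots> \<le> a + (1 + sc) * dd" using mC by (simp add: algebra_simps)
    finally have e: "arr p + dur p \<le> a + (1 + sc) * dd" .
    have "dur p \<le> C + sc" using durp N1 by (simp add: algebra_simps)
    moreover have "0 \<le> dur p" using durp N2 Cnn by simp
    ultimately show ?thesis using e szp arrge by (simp add: a_def dd_def sc_def)
  qed
qed

lemma item_sum:
  assumes C: "1 \<le> C" and d: "0 < dur it" and s: "0 \<le> sz it"
  shows "sum_list (map (\<lambda>p. sz p * (dur p + (C + sqrt C))) (big_parts_item C it)) \<le> 4 * sqrt C * (sz it * dur it)"
proof -
  define m where "m = num_mig C it"
  have sc1: "1 \<le> sqrt C" using C by simp
  have scC: "sqrt C \<le> C"
  proof -
    have "sqrt C * 1 \<le> sqrt C * sqrt C" using sc1 by (intro mult_left_mono) auto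
    then show ?thesis using C by simp
  qed
  have N2: "sqrt C * real m < dur it" using nm_props[OF C d] m_def by auto
  have mC: "real m * C \<le> dur it * sqrt C"
  proof -
    have "real m * C = (sqrt C * real m) * sqrt C" using C by (simp add: algebra_simps)
    also have "\<dots> \<le> dur it * sqrt C" using N2 sc1 by (intro mult_right_mono) auto
    finally show ?thesis .
  qed
  have "sum_list (map (\<lambda>p. sz p * (dur p + (C + sqrt C))) (big_parts_item C it))
      \<le> sum_list (map (\<lambda>p. sz it * (4 * C)) (big_parts_item C it))"
  proof (rule sum_list_mono)
    fix p assume p: "p \<in> set (big_parts_item C it)"
    have pp: "sz p = sz it" "dur p \<le> C + sqrt C" using part_props[OF C d p] by auto
    have "dur p + (C + sqrt C) \<le> 4 * C" using pp scC by simp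
    then show "sz p * (dur p + (C + sqrt C)) \<le> sz it * (4 * C)" using pp s by (simp add: mult_left_mono)
  qed
  also have "\<dots> = real m * (sz it * (4 * C))"
    by (simp add: sum_list_triv big_parts_item_def m_def)
  also have "\<dots> = 4 * sz it * (real m * C)" by (simp add: algebra_simps)
  also have "\<dots> \<le> 4 * sz it * (dur it * sqrt C)" using mC s by (intro mult_left_mono) auto
  finally show ?thesis by (simp add: algebra_simps)
qed

lemma sum_list_concat_map: "sum_list (map g (concat (map h I))) = sum_list (map (\<lambda>it. sum_list (map g (h it))) I)"
  by (induction I) auto

theorem lemma17:
  shows "\<exists>K::real. \<forall>C::real. \<forall>I::item list.
           C \<ge> 1 \<longrightarrow> valid_instance I \<longrightarrow> (\<forall>it\<in>set I. dur it \<ge> 1) \<longrightarrow>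
           FirstFit (big_parts C I) \<le> ennreal (K * sqrt C) * OPT I"
proof (intro exI[where x=10] allI impI)
  fix C :: real and I :: "item list"
  assume C: "1 \<le> C" and v: "valid_instance I" and d1: "\<forall>it\<in>set I. 1 \<le> dur it"
  define J where "J = big_parts C I"
  define sc where "sc = sqrt C"
  define D where "D = C + sc"
  have sc1: "1 \<le> sc" using C sc_def by simp
  have setJ: "set J = (\<Union>it\<in>set I. set (big_parts_item C it))" by (simp add: J_def big_parts_def)
  have dpos: "0 < dur it" if "it \<in> set I" for it using d1 that by fastforce
  have s0I: "0 \<le> sz it" if "it \<in> set I" for it using v that by (auto simp: valid_instance_def)
  have pJ: "0 \<le> sz p \<and> 0 \<le> dur p \<and> dur p \<le> D \<and> (\<exists>it\<in>set I. arr it \<le> arr p \<and> arr p + dur p \<le> arr it + (1 + sc) * dur it)"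
    if "p \<in> set J" for p
  proof -
    have "p \<in> (\<Union>it\<in>set I. set (big_parts_item C it))" using that setJ by simp
    then obtain it where it: "it \<in> set I" "p \<in> set (big_parts_item C it)" by (rule UN_E)
    have pp: "sz p = sz it \<and> 0 \<le> dur p \<and> dur p \<le> C + sqrt C \<and> arr it \<le> arr p \<and>
         arr p + dur p \<le> arr it + (1 + sqrt C) * dur it" by (rule part_props[OF C dpos[OF it(1)] it(2)])
    have q1: "0 \<le> sz p" using pp s0I[OF it(1)] by simp
    have q2: "0 \<le> dur p" "dur p \<le> D" using pp unfolding D_def sc_def by simp_all
    have q3: "\<exists>it\<in>set I. arr it \<le> arr p \<and> arr p + dur p \<le> arr it + (1 + sc) * dur it"
      using it(1) pp unfolding sc_def by blast
    show ?thesis using q1 q2 q3 by blast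
  qed
  have D0: "0 \<le> D" using C sc1 D_def by simp
  have FF: "FirstFit J \<le> emeasure lborel (\<Union>j<length J. {arr (J!j)..<arr (J!j) + dur (J!j)})
     + (\<Sum>j<length J. ennreal (2 * sz (J!j)) * ennreal (dur (J!j) + D))"
  proof -
    have a1: "\<forall>it\<in>set J. 0 \<le> sz it" using pJ by blast
    have a2: "\<forall>it\<in>set J. dur it \<le> D" using pJ by blast
    have a4: "\<forall>it\<in>set J. 0 \<le> dur it" using pJ by blast
    show ?thesis by (rule FF_bound_idx[OF a1 a2 D0 a4])
  qed
  have span: "emeasure lborel (\<Union>j<length J. {arr (J!j)..<arr (J!j) + dur (J!j)}) \<le> ennreal (1 + sc) * OPT I"
  proof -
    have "(\<Union>j<length J. {arr (J!j)..<arr (J!j) + dur (J!j)}) \<subseteq> (\<Union>it\<in>set I. {arr it..<arr it + (1 + sc) * dur it})"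
    proof
      fix t assume "t \<in> (\<Union>j<length J. {arr (J!j)..<arr (J!j) + dur (J!j)})"
      then obtain j where j: "j < length J" "t \<in> {arr (J!j)..<arr (J!j) + dur (J!j)}" by auto
      obtain it where it: "it \<in> set I" "arr it \<le> arr (J!j)" "arr (J!j) + dur (J!j) \<le> arr it + (1 + sc) * dur it"
        using pJ[OF nth_mem[OF j(1)]] by blast
      have "t \<in> {arr it..<arr it + (1 + sc) * dur it}" using it j(2) by simp
      then show "t \<in> (\<Union>it\<in>set I. {arr it..<arr it + (1 + sc) * dur it})" using it(1) by blast
    qed
    then have "emeasure lborel (\<Union>j<length J. {arr (J!j)..<arr (J!j) + dur (J!j)})
        \<le> emeasure lborel (\<Union>it\<in>set I. {arr it..<arr it + (1 + sc) * dur it})"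
    proof (rule emeasure_mono)
      show "(\<Union>it\<in>set I. {arr it..<arr it + (1 + sc) * dur it}) \<in> sets lborel"
        by (intro sets.finite_UN) auto
    qed
    also have "\<dots> \<le> ennreal (1 + sc) * emeasure lborel (\<Union>it\<in>set I. {arr it..<arr it + dur it})"
      by (rule stretch) (use sc1 in auto)
    also have "\<dots> \<le> ennreal (1 + sc) * OPT I" by (intro mult_left_mono OPT_ge_span[OF v]) auto
    finally show ?thesis .
  qed
  have vol: "(\<Sum>j<length J. ennreal (2 * sz (J!j)) * ennreal (dur (J!j) + D)) \<le> ennreal (8 * sc) * OPT I"
  proof -
    have nn: "0 \<le> 2 * sz (J!j) * (dur (J!j) + D)" if "j < length J" for j
      using pJ[OF nth_mem[OF that]] D0 by simp
    have "(\<Sum>j<length J. ennreal (2 * sz (J!j)) * ennreal (dur (J!j) + D))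
        = (\<Sum>j<length J. ennreal (2 * sz (J!j) * (dur (J!j) + D)))"
    proof (intro sum.cong refl)
      fix j assume "j \<in> {..<length J}"
      then have "0 \<le> 2 * sz (J!j)" using pJ[OF nth_mem] by auto
      then show "ennreal (2 * sz (J!j)) * ennreal (dur (J!j) + D) = ennreal (2 * sz (J!j) * (dur (J!j) + D))"
        by (simp add: ennreal_mult')
    qed
    also have "\<dots> = ennreal (\<Sum>j<length J. 2 * sz (J!j) * (dur (J!j) + D))"
      using nn by (intro sum_ennreal) auto
    also have "\<dots> \<le> ennreal (8 * sc * sum_list (map (\<lambda>it. sz it * dur it) I))"
    proof (rule ennreal_leI)
      have "(\<Sum>j<length J. 2 * sz (J!j) * (dur (J!j) + D)) = 2 * sum_list (map (\<lambda>p. sz p * (dur p + D)) J)"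
        by (simp add: sum_list_sum_nth atLeast0LessThan sum_distrib_left mult.assoc)
      also have "\<dots> = 2 * sum_list (map (\<lambda>it. sum_list (map (\<lambda>p. sz p * (dur p + D)) (big_parts_item C it))) I)"
        unfolding J_def big_parts_def by (simp only: sum_list_concat_map)
      also have "\<dots> \<le> 2 * sum_list (map (\<lambda>it. 4 * sc * (sz it * dur it)) I)"
      proof (intro mult_left_mono sum_list_mono)
        fix it assume it: "it \<in> set I"
        show "sum_list (map (\<lambda>p. sz p * (dur p + D)) (big_parts_item C it)) \<le> 4 * sc * (sz it * dur it)"
          using item_sum[OF C dpos[OF it] s0I[OF it]] unfolding D_def sc_def .
      qed simp
      also have "\<dots> = 2 * (4 * sc * sum_list (map (\<lambda>it. sz it * dur it) I))"
        by (simp add: sum_list_const_mult)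
      finally show "(\<Sum>j<length J. 2 * sz (J!j) * (dur (J!j) + D)) \<le> 8 * sc * sum_list (map (\<lambda>it. sz it * dur it) I)"
        by simp
    qed
    also have "\<dots> = ennreal (8 * sc) * ennreal (sum_list (map (\<lambda>it. sz it * dur it) I))"
      using sc1 by (simp add: ennreal_mult')
    also have "\<dots> \<le> ennreal (8 * sc) * OPT I" by (intro mult_left_mono OPT_ge_vol[OF v]) auto
    finally show ?thesis .
  qed
  have "FirstFit J \<le> ennreal (1 + sc) * OPT I + ennreal (8 * sc) * OPT I"
    using FF add_mono[OF span vol] by (rule order.trans)
  also have "\<dots> = (ennreal (1 + sc) + ennreal (8 * sc)) * OPT I"
    by (simp only: distrib_right)
  also have "(ennreal (1 + sc) + ennreal (8 * sc)) * OPT I = ennreal (1 + 9 * sc) * OPT I"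
  proof -
    have "ennreal (1 + sc) + ennreal (8 * sc) = ennreal (1 + 9 * sc)"
      using sc1 by (subst ennreal_plus[symmetric]) auto
    then show ?thesis by simp
  qed
  also have "\<dots> \<le> ennreal (10 * sc) * OPT I"
    using sc1 by (intro mult_right_mono ennreal_leI) auto
  finally show "FirstFit (big_parts C I) \<le> ennreal (10 * sqrt C) * OPT I" by (simp add: J_def sc_def)
qed

end
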